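(* Fix $M>0$ and let $\mathcal{A}$ be the class of functions $m\in W^{1,2}(0,1)$ with $\int_0^1e^{m}\,dx=M$. Then for every sufficiently small $\delta>0$ and every continuous function $h_\delta:[0,\infty)\to\mathbb{R}$, the inequality $$\int_0^1e^{2m}\,dx<\delta M^2\int_0^1|m_x|^2\,dx+h_\delta\Big(\int_0^1e^m\,dx\Big)$$ does not hold for all $m\in\mathcal{A}$. *)

theory Defs
  imports "HOL-Analysis.Analysis"
begin

definition test_fun_01 :: "(real \<Rightarrow> real) \<Rightarrow> bool" where
  "test_fun_01 \<phi> \<longleftrightarrow>
     (\<forall>n x. ((deriv ^^ n) \<phi>) differentiable (at x)) \<and>
     (\<exists>a b. 0 < a \<and> a \<le> b \<and> b < 1 \<and> (\<forall>x. x \<notin> {a..b} \<longrightarrow> \<phi> x = 0))"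

definition W12_01 :: "(real \<Rightarrow> real) \<Rightarrow> (real \<Rightarrow> real) \<Rightarrow> bool" where
  "W12_01 m g \<longleftrightarrow>
     set_borel_measurable lborel {0<..<1} m \<and>
     set_borel_measurable lborel {0<..<1} g \<and>
     set_integrable lborel {0<..<1} (\<lambda>x. (m x)\<^sup>2) \<and>
     set_integrable lborel {0<..<1} (\<lambda>x. (g x)\<^sup>2) \<and>
     (\<forall>\<phi>. test_fun_01 \<phi> \<longrightarrow>
        (LINT x:{0<..<1}|lborel. m x * deriv \<phi> x) = - (LINT x:{0<..<1}|lborel. g x * \<phi> x))"

end

theory Submission
  imports Defs
begin

lemma integ01:
  fixes f :: "real \<Rightarrow> real"
  assumes "continuous_on {0..1} f"
  shows "set_integrable lborel {0<..<1} f"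
  by (rule set_integrable_subset[OF borel_integrable_atLeastAtMost'[OF assms]]) auto

lemma FTC01:
  fixes f F :: "real \<Rightarrow> real"
  assumes "continuous_on {0..1} f"
    and "\<And>x. 0 \<le> x \<Longrightarrow> x \<le> 1 \<Longrightarrow> (F has_real_derivative f x) (at x)"
  shows "(LINT x:{0<..<1}|lborel. f x) = F 1 - F 0"
proof -
  have "interval_lebesgue_integral lborel (ereal 0) (ereal 1) f = F 1 - F 0"
    using interval_integral_FTC_finite[of 0 1 f F] assms
    by (auto simp: has_real_derivative_iff_has_vector_derivative intro: has_vector_derivative_at_within)
  then show ?thesis by (simp add: interval_lebesgue_integral_def)
qed

lemma aux6: "(y::real) > 0 \<Longrightarrow> a * y^2 / y^6 = a / y^4"
proof -
  assume "y > 0"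
  have "y^6 = y^2 * y^4" by (simp flip: power_add)
  then show ?thesis using \<open>y>0\<close> by (simp add: divide_simps)
qed

theorem lemma4:
  fixes M :: real
  assumes "M > 0"
  shows "\<exists>\<delta>0>0. \<forall>\<delta>. 0 < \<delta> \<and> \<delta> < \<delta>0 \<longrightarrow>
           (\<forall>h :: real \<Rightarrow> real. continuous_on {0..} h \<longrightarrow>
              \<not> (\<forall>m g. W12_01 m g \<and> (LINT x:{0<..<1}|lborel. exp (m x)) = M \<longrightarrow>
                    (LINT x:{0<..<1}|lborel. exp (2 * m x))
                      < \<delta> * M\<^sup>2 * (LINT x:{0<..<1}|lborel. (g x)\<^sup>2)
                        + h (LINT x:{0<..<1}|lborel. exp (m x))))"
proof (intro exI[of _ "1/24"] conjI allI impI)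
  fix \<delta> :: real and h :: "real \<Rightarrow> real"
  assume d: "0 < \<delta> \<and> \<delta> < 1/24"
  define K where "K = M\<^sup>2/3 + \<bar>h M\<bar> + M\<^sup>2"
  have Kpos: "K > 0" using assms by (simp add: K_def add_pos_nonneg)
  define e where "e = M\<^sup>2 / (6 * K)"
  have epos: "e > 0" using assms Kpos by (simp add: e_def)
  have "M\<^sup>2 \<le> K" unfolding K_def using zero_le_power2[of M] abs_ge_zero[of "h M"] by linarith
  then have ele: "e \<le> 1" using Kpos by (simp add: e_def field_simps)
  have eK: "M\<^sup>2 / (6 * e) = K" using Kpos assms by (simp add: e_def field_simps)
  define c where "c = M * e * (1 + e)"
  have cpos: "c > 0" using assms epos by (simp add: c_def)
  define m where "m = (\<lambda>x::real. ln c - 2 * ln (x + e))"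
  define g where "g = (\<lambda>x::real. - 2 / (x + e))"
  have expm: "exp (m x) = c / (x + e)^2" if "x \<ge> 0" for x
  proof -
    have "x + e > 0" using that epos by simp
    then show ?thesis using cpos
      by (simp add: m_def exp_diff exp_double)
  qed
  have exp2m: "exp (2 * m x) = c^2 / (x + e)^4" if "x \<ge> 0" for x
  proof -
    have "exp (2 * m x) = exp (m x)^2" by (simp add: exp_double[symmetric] mult.commute)
    then show ?thesis using expm[OF that] by (simp add: power_divide flip: power_mult)
  qed
  have g2: "(g x)^2 = 4 / (x + e)^2" for x
    by (simp add: g_def power_divide)
  have Dm: "(m has_real_derivative g x) (at x)" if "x \<ge> 0" for x
  proof -
    have "x + e > 0" using that epos by simp
    then show ?thesis unfolding m_def g_def
      by (auto intro!: derivative_eq_intros simp: field_simps)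
  qed
  have contm: "continuous_on {0..1} m"
    using Dm by (meson DERIV_isCont atLeastAtMost_iff continuous_at_imp_continuous_on)
  have contg: "continuous_on {0..1} g"
    unfolding g_def using epos by (intro continuous_intros) auto
  show "\<not> (\<forall>m g. W12_01 m g \<and> (LINT x:{0<..<1}|lborel. exp (m x)) = M \<longrightarrow>
                    (LINT x:{0<..<1}|lborel. exp (2 * m x))
                      < \<delta> * M\<^sup>2 * (LINT x:{0<..<1}|lborel. (g x)\<^sup>2)
                        + h (LINT x:{0<..<1}|lborel. exp (m x)))"
  proof
    assume H: "\<forall>m g. W12_01 m g \<and> (LINT x:{0<..<1}|lborel. exp (m x)) = M \<longrightarrow>
                    (LINT x:{0<..<1}|lborel. exp (2 * m x))
                      < \<delta> * M\<^sup>2 * (LINT x:{0<..<1}|lborel. (g x)\<^sup>2)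
                        + h (LINT x:{0<..<1}|lborel. exp (m x))"
    have I1: "(LINT x:{0<..<1}|lborel. exp (m x)) = M"
    proof -
      have "(LINT x:{0<..<1}|lborel. exp (m x)) = (LINT x:{0<..<1}|lborel. c / (x + e)^2)"
        by (rule set_lebesgue_integral_cong) (auto simp: expm)
      also have "\<dots> = (- c / (1 + e)) - (- c / (0 + e))"
      proof (rule FTC01)
        show "continuous_on {0..1} (\<lambda>x. c / (x + e)^2)"
          using epos by (intro continuous_intros) (auto simp: add_pos_nonneg)
        fix x :: real assume "0 \<le> x" "x \<le> 1"
        then have "x + e > 0" using epos by simp
        then show "((\<lambda>x. - c / (x + e)) has_real_derivative c / (x + e)^2) (at x)"
          by (auto intro!: derivative_eq_intros simp: field_simps power2_eq_square)
      qed
      also have "\<dots> = M" using epos by (simp add: c_def field_simps)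
      finally show ?thesis .
    qed
    have I2: "(LINT x:{0<..<1}|lborel. exp (2 * m x)) = c^2 / (3 * e^3) - (c^2) / (3 * (1 + e)^3)"
    proof -
      have "(LINT x:{0<..<1}|lborel. exp (2 * m x)) = (LINT x:{0<..<1}|lborel. c^2 / (x + e)^4)"
        by (rule set_lebesgue_integral_cong) (auto simp: exp2m)
      also have "\<dots> = (- (c^2) / (3 * (1 + e)^3)) - (- (c^2) / (3 * (0 + e)^3))"
      proof (rule FTC01)
        show "continuous_on {0..1} (\<lambda>x. c^2 / (x + e)^4)"
          using epos by (intro continuous_intros) (auto simp: add_pos_nonneg)
        fix x :: real assume "0 \<le> x" "x \<le> 1"
        then have "x + e > 0" using epos by simp
        then show "((\<lambda>x. - (c^2) / (3 * (x + e)^3)) has_real_derivative c^2 / (x + e)^4) (at x)"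
          by (auto intro!: derivative_eq_intros simp: aux6)
      qed
      finally show ?thesis by simp
    qed
    have I3: "(LINT x:{0<..<1}|lborel. (g x)^2) = 4 / e - 4 / (1 + e)"
    proof -
      have "(LINT x:{0<..<1}|lborel. (g x)^2) = (LINT x:{0<..<1}|lborel. 4 / (x + e)^2)"
        by (simp add: g2)
      also have "\<dots> = (- 4 / (1 + e)) - (- 4 / (0 + e))"
      proof (rule FTC01)
        show "continuous_on {0..1} (\<lambda>x. 4 / (x + e)^2)"
          using epos by (intro continuous_intros) (auto simp: add_pos_nonneg)
        fix x :: real assume "0 \<le> x" "x \<le> 1"
        then have "x + e > 0" using epos by simp
        then show "((\<lambda>x. - 4 / (x + e)) has_real_derivative 4 / (x + e)^2) (at x)"
          by (auto intro!: derivative_eq_intros simp: field_simps power2_eq_square)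
      qed
      finally show ?thesis by simp
    qed
    have W: "W12_01 m g"
      unfolding W12_01_def
    proof (intro conjI allI impI)
      show "set_borel_measurable lborel {0<..<1} m"
        using integ01[OF contm] unfolding set_integrable_def set_borel_measurable_def
        by (rule borel_measurable_integrable)
      show "set_borel_measurable lborel {0<..<1} g"
        using integ01[OF contg] unfolding set_integrable_def set_borel_measurable_def
        by (rule borel_measurable_integrable)
      show "set_integrable lborel {0<..<1} (\<lambda>x. (m x)\<^sup>2)"
        by (rule integ01) (intro continuous_intros contm)
      show "set_integrable lborel {0<..<1} (\<lambda>x. (g x)\<^sup>2)"
        by (rule integ01) (intro continuous_intros contg)
      fix \<phi> :: "real \<Rightarrow> real"
      assume tf: "test_fun_01 \<phi>"
      then have dif: "\<phi> differentiable (at x)" for x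
        unfolding test_fun_01_def by (metis funpow_0)
      from tf have dif1: "deriv \<phi> differentiable (at x)" for x
        unfolding test_fun_01_def by (metis funpow_0 funpow_Suc_right o_apply)
      from tf obtain a b where ab: "0 < a" "b < 1" "\<forall>x. x \<notin> {a..b} \<longrightarrow> \<phi> x = 0"
        unfolding test_fun_01_def by blast
      have phi0: "\<phi> 0 = 0" and phi1: "\<phi> 1 = 0" using ab by auto
      have cphi: "continuous_on {0..1} \<phi>"
        using dif by (meson continuous_at_imp_continuous_on differentiable_imp_continuous_within)
      have cdphi: "continuous_on {0..1} (deriv \<phi>)"
        using dif1 by (meson continuous_at_imp_continuous_on differentiable_imp_continuous_within)
      have Dphi: "(\<phi> has_real_derivative deriv \<phi> x) (at x)" for x
        using dif[of x] by (simp add: DERIV_deriv_iff_real_differentiable)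
      have ci1: "continuous_on {0..1} (\<lambda>x. m x * deriv \<phi> x)"
        by (intro continuous_intros contm cdphi)
      have ci2: "continuous_on {0..1} (\<lambda>x. g x * \<phi> x)"
        by (intro continuous_intros contg cphi)
      have "(LINT x:{0<..<1}|lborel. g x * \<phi> x + m x * deriv \<phi> x) = m 1 * \<phi> 1 - m 0 * \<phi> 0"
      proof (rule FTC01)
        show "continuous_on {0..1} (\<lambda>x. g x * \<phi> x + m x * deriv \<phi> x)"
          by (intro continuous_intros contm cdphi contg cphi)
        fix x :: real assume "0 \<le> x" "x \<le> 1"
        then show "((\<lambda>x. m x * \<phi> x) has_real_derivative g x * \<phi> x + m x * deriv \<phi> x) (at x)"
          using DERIV_mult[OF Dm Dphi] by (simp add: algebra_simps)
      qed
      also have "\<dots> = 0" using phi0 phi1 by simp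
      finally have z: "(LINT x:{0<..<1}|lborel. g x * \<phi> x + m x * deriv \<phi> x) = 0" .
      have "(LINT x:{0<..<1}|lborel. g x * \<phi> x + m x * deriv \<phi> x)
            = (LINT x:{0<..<1}|lborel. g x * \<phi> x) + (LINT x:{0<..<1}|lborel. m x * deriv \<phi> x)"
        by (rule set_integral_add) (intro integ01 ci1 ci2)+
      then show "(LINT x:{0<..<1}|lborel. m x * deriv \<phi> x) = - (LINT x:{0<..<1}|lborel. g x * \<phi> x)"
        using z by linarith
    qed
    have lt: "c^2 / (3 * e^3) - (c^2) / (3 * (1 + e)^3) < \<delta> * M\<^sup>2 * (4 / e - 4 / (1 + e)) + h M"
      using H[rule_format, of m g] W I1 I2 I3 by simp
    have A: "c^2/(3*e^3) = M^2*(1+e)^2/(3*e)"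
      using epos by (simp add: c_def field_simps eval_nat_numeral)
    have A': "M^2*(1+e)^2/(3*e) \<ge> M^2/(3*e)"
    proof -
      have "(1+e)^2 \<ge> (1::real)" using epos by (simp add: one_le_power)
      then have "M^2*(1+e)^2 \<ge> M^2 * 1" by (intro mult_left_mono) auto
      then show ?thesis using epos by (intro divide_right_mono) auto
    qed
    have B: "c^2/(3*(1+e)^3) = M^2*e^2/(3*(1+e))"
    proof -
      have p: "(1+e)^3 = (1+e)^2*(1+e)" by (simp add: eval_nat_numeral)
      have "c^2 = (M^2*e^2)*(1+e)^2" by (simp add: c_def power_mult_distrib)
      then show ?thesis using epos by (simp add: p)
    qed
    have B': "M^2*e^2/(3*(1+e)) \<le> M^2/3"
    proof -
      have "e^2 \<le> 1" using epos ele by (simp add: power_le_one)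
      then have "M^2*e^2 \<le> M^2*1" by (intro mult_left_mono) auto
      also have "\<dots> \<le> M^2*(1+e)" using epos by (intro mult_left_mono) auto
      finally have "M^2*e^2 \<le> M^2*(1+e)" .
      then show ?thesis using epos by (simp add: field_simps)
    qed
    have C: "\<delta> * M\<^sup>2 * (4 / e - 4 / (1 + e)) \<le> M^2/(6*e)"
    proof -
      have "4 / e - 4 / (1 + e) \<le> 4 / e" using epos by simp
      then have "\<delta> * M\<^sup>2 * (4 / e - 4 / (1 + e)) \<le> \<delta> * M\<^sup>2 * (4 / e)"
        using d by (intro mult_left_mono) auto
      also have "\<dots> = (4 * \<delta>) * (M\<^sup>2 / e)" by simp
      also have "\<dots> \<le> (1/6) * (M\<^sup>2 / e)"
        using d epos by (intro mult_right_mono) auto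
      also have "\<dots> = M^2/(6*e)" by simp
      finally show ?thesis .
    qed
    have E: "M^2/(3*e) = 2 * K" using eK epos by (simp add: field_simps)
    have "h M \<le> \<bar>h M\<bar>" by simp
    have "M\<^sup>2 > 0" using assms by simp
    have L: "c^2/(3*e^3) - c^2/(3*(1+e)^3) \<ge> 2*K - M^2/3" using A A' B B' E by linarith
    have R: "\<delta> * M\<^sup>2 * (4 / e - 4 / (1 + e)) + h M \<le> K + \<bar>h M\<bar>"
      using C eK \<open>h M \<le> \<bar>h M\<bar>\<close> by linarith
    have "2*K - M^2/3 < K + \<bar>h M\<bar>" using L R lt by linarith
    then show False using K_def \<open>M\<^sup>2 > 0\<close> by linarith
  qed
qed simp

end
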